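(* Let $b\ge2$ and let $d$ be a base-$b$ martingale with $d(\lambda)=1$ and $d(w)\le |w|^c$ for all nonempty $w$. Then there is $c'>0$ such that for every sufficiently long $y\in\{0,1\}^*$, with $m(y)=\lceil |y|/\log_2 b+c'\log_2|y|\rceil$, \[|d^{(2)}(y)-d^{(2)}_{m(y)}(y)|\le 1/|y|^3,\] where $d^{(2)}(y)=2^{|y|}\mu(y)$ and $d^{(2)}_m(y)=2^{|y|}\mu_m(y)$.
   Context: $\Sigma_b=\{0,\dots,b-1\}$. A base-$b$ martingale is $d:\Sigma_b^*\to[0,\infty)$ with $d(w)=\frac1b\sum_{a}d(wa)$. $[w]_b=[x,x+b^{-|w|})$ with $x=\sum_{i=1}^{|w|}w[i-1]b^{-i}$, similarly $[y]_2$. $\gamma(w)=b^{-|w|}d(w)$ extends to a Borel probability measure $\hat\gamma$ on $[0,1)$ with $\hat\gamma([w]_b)=\gamma(w)$; $\mu(y)=\hat\gamma([y]_2)$; $\mu_m(y)=\sum\{\gamma(w):|w|=m,\ [w]_b\cap[y]_2\ne\emptyset\}$. *)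

theory Defs
  imports "HOL-Analysis.Analysis" "HOL-Probability.Probability"
begin

definition words :: "nat \<Rightarrow> nat list set" where
  "words b = {w. set w \<subseteq> {..<b}}"

definition words_len :: "nat \<Rightarrow> nat \<Rightarrow> nat list set" where
  "words_len b m = {w. set w \<subseteq> {..<b} \<and> length w = m}"

definition martingale :: "nat \<Rightarrow> (nat list \<Rightarrow> real) \<Rightarrow> bool" where
  "martingale b d \<longleftrightarrow>
     (\<forall>w \<in> words b. 0 \<le> d w \<and> d w = (1 / real b) * (\<Sum>a<b. d (w @ [a])))"

definition cyl :: "nat \<Rightarrow> nat list \<Rightarrow> real set" where
  "cyl b w = (let x = (\<Sum>i<length w. real (w ! i) * real b powi (- int (i + 1)))
              in {x ..< x + real b powi (- int (length w))})"

definition gam :: "nat \<Rightarrow> (nat list \<Rightarrow> real) \<Rightarrow> nat list \<Rightarrow> real" where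
  "gam b d w = real b powi (- int (length w)) * d w"

definition mu_m :: "nat \<Rightarrow> (nat list \<Rightarrow> real) \<Rightarrow> nat \<Rightarrow> nat list \<Rightarrow> real" where
  "mu_m b d m y = (\<Sum>w \<in> {w \<in> words_len b m. cyl b w \<inter> cyl 2 y \<noteq> {}}. gam b d w)"

end

theory Submission
  imports Defs "HOL-Real_Asymp.Real_Asymp"
begin

fun bval :: "nat \<Rightarrow> nat list \<Rightarrow> nat" where
  "bval b [] = 0"
| "bval b (a # w) = a * b ^ length w + bval b w"

lemma bval_lt: "set w \<subseteq> {..<b} \<Longrightarrow> bval b w < b ^ length w"
proof (induction w)
  case Nil then show ?case by simp
next
  case (Cons a w)
  then have a: "a < b" and h: "bval b w < b ^ length w" by auto
  have "bval b (a#w) < a * b ^ length w + b ^ length w" using h by simp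
  also have "\<dots> = (a+1) * b ^ length w" by simp
  also have "\<dots> \<le> b * b ^ length w" using a by (intro mult_le_mono1) simp
  finally show ?case by simp
qed

lemma bval_sum: "(b::nat) > 0 \<Longrightarrow> (\<Sum>i<length w. real (w ! i) / real b ^ (i+1)) = real (bval b w) / real b ^ length w"
proof (induction w)
  case Nil then show ?case by simp
next
  case (Cons a w)
  have "(\<Sum>i<length (a#w). real ((a#w) ! i) / real b ^ (i+1))
      = real a / real b + (\<Sum>i<length w. real (w ! i) / real b ^ (i+2))"
    by (simp only: length_Cons sum.lessThan_Suc_shift) simp
  also have "(\<Sum>i<length w. real (w ! i) / real b ^ (i+2)) = (1/real b) * (\<Sum>i<length w. real (w ! i) / real b ^ (i+1))"
    by (simp add: sum_distrib_left)
  also have "\<dots> = (1/real b) * (real (bval b w) / real b ^ length w)" using Cons by simp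
  finally show ?case using Cons.prems by (simp add: field_simps)
qed

lemma powi_neg: "(x::real) powi (- int k) = 1 / x ^ k"
  by (simp add: power_int_minus power_int_of_nat divide_inverse)

lemma cyl_eq: "(b::nat) > 0 \<Longrightarrow> cyl b w = {real (bval b w) / real b ^ length w ..< (real (bval b w) + 1) / real b ^ length w}"
proof -
  assume b: "b > 0"
  have "(\<Sum>i<length w. real (w ! i) * real b powi (- int (i + 1))) = (\<Sum>i<length w. real (w ! i) / real b ^ (i+1))"
    by (intro sum.cong refl) (metis powi_neg of_nat_add of_nat_1 times_divide_eq_right mult_1_right)
  then show ?thesis unfolding cyl_def Let_def using bval_sum[OF b, of w] b
    by (simp add: powi_neg add_divide_distrib)
qed

lemma bval_inj: "length u = length v \<Longrightarrow> set u \<subseteq> {..<b} \<Longrightarrow> set v \<subseteq> {..<b} \<Longrightarrow> bval b u = bval b v \<Longrightarrow> u = v"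
proof (induction u v rule: list_induct2)
  case Nil then show ?case by simp
next
  case (Cons a u a' v)
  have hu: "bval b u < b ^ length u" using bval_lt[of u b] Cons.prems(1) by simp
  have hv: "bval b v < b ^ length u" using bval_lt[of v b] Cons.prems(2) Cons.hyps(1) by simp
  have e: "a * b ^ length u + bval b u = a' * b ^ length u + bval b v" using Cons by simp
  have pos: "b ^ length u > 0" by (rule le_less_trans[OF _ hu]) simp
  have "(a * b ^ length u + bval b u) div b ^ length u = a" using hu pos by simp
  moreover have "(a' * b ^ length u + bval b v) div b ^ length u = a'" using hv pos by simp
  ultimately have "a = a'" using e by simp
  then show ?case using e Cons by simp
qed

lemma bval_surj: "(b::nat) > 0 \<Longrightarrow> k < b ^ m \<Longrightarrow> \<exists>w. length w = m \<and> set w \<subseteq> {..<b} \<and> bval b w = k"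
proof (induction m arbitrary: k)
  case 0 then show ?case by simp
next
  case (Suc m)
  have pos: "b ^ m > 0" using Suc.prems by simp
  have "k mod b ^ m < b ^ m" using pos by simp
  then obtain w where w: "length w = m" "set w \<subseteq> {..<b}" "bval b w = k mod b ^ m" using Suc by blast
  have a: "k div b ^ m < b" using Suc.prems by (simp add: less_mult_imp_div_less mult.commute)
  have "bval b ((k div b ^ m) # w) = k" using w div_mult_mod_eq[of k "b^m"] by simp
  then show ?case using w a by (intro exI[of _ "(k div b ^ m) # w"]) simp
qed

lemma floor_iv: "(N::real) > 0 \<Longrightarrow> x \<in> {real k / N ..< (real k + 1) / N} \<longleftrightarrow> floor (x * N) = int k"
  by (simp add: floor_eq_iff field_simps)

lemma ev: "eventually (\<lambda>n::nat. (\<bar>c\<bar>+5) * log 2 (real n) + 1 \<le> real n \<and> 2 * 2 powr \<bar>c\<bar> \<le> real n ^ 2 \<and> 2 \<le> real n) sequentially"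
proof -
  have "eventually (\<lambda>n::nat. (\<bar>c\<bar>+5) * log 2 (real n) + 1 \<le> real n) sequentially" by real_asymp
  moreover have "eventually (\<lambda>n::nat. 2 * 2 powr \<bar>c\<bar> \<le> real n ^ 2) sequentially" by real_asymp
  moreover have "eventually (\<lambda>n::nat. 2 \<le> real n) sequentially" by real_asymp
  ultimately show ?thesis by eventually_elim auto
qed

lemma asym:
  fixes b :: nat and n :: nat and c :: real
  assumes b: "b \<ge> 2" and n2: "2 \<le> real n"
    and e1: "(\<bar>c\<bar>+5) * log 2 (real n) + 1 \<le> real n" and e2: "2 * 2 powr \<bar>c\<bar> \<le> real n ^ 2"
    and m: "m = nat \<lceil>real n / log 2 (real b) + (\<bar>c\<bar>+5) * log 2 (real n)\<rceil>"
  shows "1 \<le> m" "2 ^ n * (2 * (real m powr c / real b ^ m)) \<le> 1 / real n ^ 3"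
proof -
  define L where "L = log 2 (real b)"
  define c' where "c' = \<bar>c\<bar>+5"
  define x where "x = real n / L + c' * log 2 (real n)"
  have L1: "1 \<le> L" unfolding L_def using b by simp
  have ln1: "1 \<le> log 2 (real n)" using n2 by simp
  have c'5: "5 \<le> c'" unfolding c'_def by simp
  have x5: "5 \<le> x" unfolding x_def using L1 ln1 c'5 n2
    by (smt (verit) divide_nonneg_nonneg mult_le_cancel_left1)
  have rm: "real m = of_int \<lceil>x\<rceil>" unfolding m x_def L_def c'_def using x5 unfolding x_def L_def c'_def
    by (simp add: of_nat_nat)
  have mx: "x \<le> real m" "real m \<le> x + 1" unfolding rm by linarith+
  then show "1 \<le> m" using x5 by linarith
  have "real n / L \<le> real n" using L1 n2 by (simp add: divide_le_eq)
  then have m2n: "real m \<le> 2 * real n" using mx e1 unfolding x_def c'_def by linarith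
  have m1: "1 \<le> real m" using mx x5 by linarith
  have "real b ^ m = real b powr real m" using b by (simp add: powr_realpow)
  also have "\<dots> \<ge> real b powr x" using b mx by (intro powr_mono) auto
  moreover have "real b powr x = 2 powr (L * x)" unfolding L_def using b
    by (simp add: powr_powr[symmetric] )
  moreover have "L * x = real n + (L * c') * log 2 (real n)" unfolding x_def using L1 by (simp add: field_simps)
  moreover have "2 powr (real n + (L * c') * log 2 (real n)) \<ge> 2 powr (real n + c' * log 2 (real n))"
    using L1 c'5 ln1 by (intro powr_mono) (auto intro!: mult_right_mono)
  moreover have "2 powr (real n + c' * log 2 (real n)) = 2 ^ n * real n powr c'"
    using n2 by (simp add: powr_add powr_realpow mult.commute[of c'] powr_powr[symmetric])
  ultimately have bm: "real b ^ m \<ge> 2 ^ n * real n powr c'" by (smt (verit))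
  have "real m powr c \<le> real m powr \<bar>c\<bar>" using m1 by (intro powr_mono) auto
  also have "\<dots> \<le> (2 * real n) powr \<bar>c\<bar>" using m1 m2n by (intro powr_mono2) auto
  also have "\<dots> = 2 powr \<bar>c\<bar> * real n powr \<bar>c\<bar>" using n2 by (simp add: powr_mult)
  finally have mc: "real m powr c \<le> 2 powr \<bar>c\<bar> * real n powr \<bar>c\<bar>" .
  have nc': "real n powr c' = real n powr \<bar>c\<bar> * real n ^ 5" unfolding c'_def using n2
    by (simp add: powr_add powr_realpow)
  have pos: "0 < real n powr \<bar>c\<bar>" using n2 by simp
  have "2 ^ n * (2 * (real m powr c / real b ^ m)) \<le> 2 ^ n * (2 * (2 powr \<bar>c\<bar> * real n powr \<bar>c\<bar> / (2 ^ n * real n powr c')))"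
    using mc bm pos n2 by (intro mult_left_mono frac_le) auto
  also have "\<dots> = 2 * 2 powr \<bar>c\<bar> / real n ^ 5" using pos n2 unfolding nc' by (simp add: field_simps)
  also have "\<dots> \<le> real n ^ 2 / real n ^ 5" using e2 n2 by (intro divide_right_mono) auto
  also have "\<dots> = 1 / real n ^ 3" using n2 by (simp add: field_simps)
  finally show "2 ^ n * (2 * (real m powr c / real b ^ m)) \<le> 1 / real n ^ 3" .
qed

lemma iv_boundary:
  fixes a a' p q :: real
  assumes "{a..<a'} \<inter> {p..<q} \<noteq> {}" "\<not> {a..<a'} \<subseteq> {p..<q}"
  shows "p \<in> {a..<a'} \<or> q \<in> {a..<a'}"
proof -
  obtain z where "z \<in> {a..<a'} \<inter> {p..<q}" using assms(1) by blast
  then have z: "a \<le> z" "z < a'" "p \<le> z" "z < q" by auto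
  obtain t where "t \<in> {a..<a'}" "t \<notin> {p..<q}" using assms(2) by blast
  then have t: "a \<le> t" "t < a'" "\<not> (p \<le> t \<and> t < q)" by auto
  show ?thesis
  proof (cases "t < p")
    case True then show ?thesis using z t by auto
  next
    case False then show ?thesis using z t by auto
  qed
qed

lemma cyl_sub: "(B::nat) > 0 \<Longrightarrow> set v \<subseteq> {..<B} \<Longrightarrow> cyl B v \<subseteq> {0..<1}"
proof -
  assume B: "B > 0" and v: "set v \<subseteq> {..<B}"
  have "bval B v + 1 \<le> B ^ length v" using bval_lt[OF v] by simp
  then have "real (bval B v) + 1 \<le> real B ^ length v" by (metis of_nat_1 of_nat_add of_nat_le_iff of_nat_power)
  moreover have "real B ^ length v > 0" using B by simp
  ultimately have "(real (bval B v) + 1) / real B ^ length v \<le> 1" by simp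
  then show ?thesis unfolding cyl_eq[OF B] by auto
qed

theorem mainTheorem8:
  fixes b :: nat and d :: "nat list \<Rightarrow> real" and c :: real and M :: "real measure"
  assumes "b \<ge> 2"
    and "martingale b d"
    and "d [] = 1"
    and "\<forall>w \<in> words b. w \<noteq> [] \<longrightarrow> d w \<le> real (length w) powr c"
    and "prob_space M"
    and "sets M = sets (restrict_space borel {0..<1::real})"
    and "\<forall>w \<in> words b. measure M (cyl b w) = gam b d w"
  shows "\<exists>c' > 0. \<exists>N. \<forall>y \<in> words 2. length y \<ge> N \<longrightarrow>
           (let m = nat \<lceil>real (length y) / log 2 (real b) + c' * log 2 (real (length y))\<rceil>
            in \<bar>2 ^ length y * measure M (cyl 2 y) - 2 ^ length y * mu_m b d m y\<bar>
                 \<le> 1 / real (length y) ^ 3)"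
proof -
  note b2 = assms(1) and dbound = assms(4) and sM = assms(6) and gM = assms(7)
  interpret prob_space M by (rule assms(5))
  have b0: "b > 0" using b2 by simp
  obtain N where N: "\<And>n. n \<ge> N \<Longrightarrow> (\<bar>c\<bar>+5) * log 2 (real n) + 1 \<le> real n \<and> 2 * 2 powr \<bar>c\<bar> \<le> real n ^ 2 \<and> 2 \<le> real n"
    using ev[of c] unfolding eventually_sequentially by blast
  have cylsets: "cyl B v \<in> sets M" if "B > 0" "set v \<subseteq> {..<B}" for B v
  proof -
    have "cyl B v \<in> sets borel" unfolding cyl_eq[OF that(1)] by simp
    then show ?thesis unfolding sM using cyl_sub[OF that] by (subst sets_restrict_space_iff) auto
  qed
  show ?thesis
  proof (intro exI[of _ "\<bar>c\<bar>+5"] conjI exI[of _ N] ballI impI)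
    show "0 < \<bar>c\<bar> + 5" by simp
    fix y assume y: "y \<in> words 2" and yN: "N \<le> length y"
    define n where "n = length y"
    define m where "m = nat \<lceil>real n / log 2 (real b) + (\<bar>c\<bar>+5) * log 2 (real n)\<rceil>"
    have e: "(\<bar>c\<bar>+5) * log 2 (real n) + 1 \<le> real n" "2 * 2 powr \<bar>c\<bar> \<le> real n ^ 2" "2 \<le> real n"
      using N[OF yN] unfolding n_def by auto
    note A = asym[OF b2 e(3) e(1) e(2) m_def]
    have ys: "set y \<subseteq> {..<2}" using y unfolding words_def by auto
    define J where "J = cyl 2 y"
    define p where "p = real (bval 2 y) / 2 ^ n"
    define q where "q = (real (bval 2 y) + 1) / 2 ^ n"
    have J: "J = {p..<q}" unfolding J_def p_def q_def n_def using cyl_eq[of 2 y] by simp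
    have JM: "J \<in> sets M" unfolding J_def using cylsets[of 2 y] ys by simp
    have J01: "J \<subseteq> {0..<1}" unfolding J_def using cyl_sub[of 2 y] ys by simp
    define W where "W = words_len b m"
    have finW: "finite W" unfolding W_def words_len_def using finite_lists_length_eq[of "{..<b}" m] by simp
    have Wc: "cyl b w = {real (bval b w) / real b ^ m ..< (real (bval b w) + 1) / real b ^ m}" if "w \<in> W" for w
      using cyl_eq[OF b0, of w] that unfolding W_def words_len_def by simp
    have Wset: "set w \<subseteq> {..<b}" "length w = m" if "w \<in> W" for w
      using that unfolding W_def words_len_def by auto
    have Wwords: "w \<in> words b" if "w \<in> W" for w using Wset[OF that] unfolding words_def by simp
    have WM: "cyl b w \<in> sets M" if "w \<in> W" for w using cylsets[OF b0 Wset(1)[OF that]] .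
    have bm0: "real b ^ m > 0" using b0 by simp
    have disj: "w1 = w2" if "w1 \<in> W" "w2 \<in> W" "x \<in> cyl b w1" "x \<in> cyl b w2" for w1 w2 x
    proof -
      have "floor (x * real b ^ m) = int (bval b w1)" using that(3) floor_iv[OF bm0] Wc[OF that(1)] by blast
      moreover have "floor (x * real b ^ m) = int (bval b w2)" using that(4) floor_iv[OF bm0] Wc[OF that(2)] by blast
      ultimately have "bval b w1 = bval b w2" by simp
      then show ?thesis using bval_inj Wset that(1,2) by metis
    qed
    define S where "S = {w \<in> W. cyl b w \<inter> J \<noteq> {}}"
    have finS: "finite S" unfolding S_def using finW by simp
    have cover: "J = (\<Union>w\<in>S. J \<inter> cyl b w)"
    proof
      show "J \<subseteq> (\<Union>w\<in>S. J \<inter> cyl b w)"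
      proof
        fix x assume xJ: "x \<in> J"
        then have x01: "0 \<le> x" "x < 1" using J01 by auto
        define k where "k = nat (floor (x * real b ^ m))"
        have fl0: "floor (x * real b ^ m) \<ge> 0" using x01 bm0 by simp
        have "x * real b ^ m < real b ^ m" using x01 bm0 by simp
        then have "floor (x * real b ^ m) < int (b ^ m)" by (subst floor_less_iff) simp
        then have "k < b ^ m" unfolding k_def using fl0 by linarith
        then obtain w where w: "length w = m" "set w \<subseteq> {..<b}" "bval b w = k" using bval_surj[OF b0] by blast
        then have wW: "w \<in> W" unfolding W_def words_len_def by simp
        have "floor (x * real b ^ m) = int (bval b w)" using w(3) fl0 unfolding k_def by simp
        then have "x \<in> cyl b w" using floor_iv[OF bm0] Wc[OF wW] by blast
        then show "x \<in> (\<Union>w\<in>S. J \<inter> cyl b w)" using xJ wW unfolding S_def by blast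
      qed
    qed auto
    have muJ: "measure M J = (\<Sum>w\<in>S. measure M (J \<inter> cyl b w))"
    proof -
      have "measure M (\<Union>w\<in>S. J \<inter> cyl b w) = (\<Sum>w\<in>S. measure M (J \<inter> cyl b w))"
      proof (rule finite_measure_finite_Union[OF finS])
        show "(\<lambda>w. J \<inter> cyl b w) ` S \<subseteq> sets M" using JM WM unfolding S_def by auto
        show "disjoint_family_on (\<lambda>w. J \<inter> cyl b w) S"
          unfolding disjoint_family_on_def S_def using disj by blast
      qed
      then show ?thesis using cover by simp
    qed
    have mum: "mu_m b d m y = (\<Sum>w\<in>S. measure M (cyl b w))"
      unfolding mu_m_def S_def W_def J_def using gM unfolding words_len_def words_def
      by (intro sum.cong) auto
    define f where "f w = measure M (cyl b w) - measure M (J \<inter> cyl b w)" for w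
    have diff: "mu_m b d m y - measure M J = (\<Sum>w\<in>S. f w)"
      unfolding mum muJ f_def by (simp add: sum_subtractf)
    define B where "B = real m powr c / real b ^ m"
    have B0: "0 \<le> B" unfolding B_def by simp
    have f0: "0 \<le> f w" if "w \<in> S" for w
      unfolding f_def using that WM JM unfolding S_def by (auto intro!: finite_measure_mono)
    have fB: "f w \<le> B" if "w \<in> S" for w
    proof -
      have wW: "w \<in> W" using that unfolding S_def by simp
      have "f w \<le> measure M (cyl b w)" unfolding f_def by simp
      also have "\<dots> = gam b d w" using gM Wwords[OF wW] by simp
      also have "\<dots> = d w / real b ^ m" unfolding gam_def using Wset[OF wW] by (simp add: powi_neg)
      also have "\<dots> \<le> B" unfolding B_def using dbound Wwords[OF wW] Wset(2)[OF wW] A(1) bm0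
        by (intro divide_right_mono) auto
      finally show ?thesis .
    qed
    define P where "P = {w \<in> W. p \<in> cyl b w}"
    define Q where "Q = {w \<in> W. q \<in> cyl b w}"
    have cP: "card P \<le> 1" unfolding P_def using finW disj
      by (subst One_nat_def, subst card_le_Suc0_iff_eq) auto
    have cQ: "card Q \<le> 1" unfolding Q_def using finW disj
      by (subst One_nat_def, subst card_le_Suc0_iff_eq) auto
    have fz: "f w = 0" if "w \<in> S - (P \<union> Q)" for w
    proof -
      have wW: "w \<in> W" and meet: "cyl b w \<inter> J \<noteq> {}" using that unfolding S_def by auto
      have "cyl b w \<subseteq> J"
      proof (rule ccontr)
        assume "\<not> cyl b w \<subseteq> J"
        then have "p \<in> cyl b w \<or> q \<in> cyl b w" using iv_boundary meet unfolding J Wc[OF wW] by blast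
        then show False using that wW unfolding P_def Q_def by auto
      qed
      then have "J \<inter> cyl b w = cyl b w" by auto
      then show ?thesis unfolding f_def by simp
    qed
    have "(\<Sum>w\<in>S. f w) = (\<Sum>w\<in>S \<inter> (P \<union> Q). f w)"
      using finS fz by (intro sum.mono_neutral_right) auto
    also have "\<dots> \<le> real (card (S \<inter> (P \<union> Q))) * B"
      using fB by (intro sum_bounded_above) auto
    also have "\<dots> \<le> 2 * B"
    proof -
      have "card (S \<inter> (P \<union> Q)) \<le> card (P \<union> Q)" using finW unfolding P_def Q_def by (intro card_mono) auto
      also have "\<dots> \<le> card P + card Q" by (rule card_Un_le)
      finally have "card (S \<inter> (P \<union> Q)) \<le> 2" using cP cQ by simp
      then show ?thesis using B0 by (intro mult_right_mono) auto
    qed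
    finally have sumB: "(\<Sum>w\<in>S. f w) \<le> 2 * B" .
    have sum0: "0 \<le> (\<Sum>w\<in>S. f w)" using f0 by (intro sum_nonneg) auto
    have "\<bar>2 ^ n * measure M J - 2 ^ n * mu_m b d m y\<bar> = 2 ^ n * (\<Sum>w\<in>S. f w)"
    proof -
      have "2 ^ n * measure M J - 2 ^ n * mu_m b d m y = 2 ^ n * (measure M J - mu_m b d m y)"
        by (simp add: right_diff_distrib)
      also have "measure M J - mu_m b d m y = - (\<Sum>w\<in>S. f w)" using diff by simp
      finally show ?thesis using sum0 by (simp add: abs_mult)
    qed
    also have "\<dots> \<le> 2 ^ n * (2 * B)" using sumB by simp
    also have "\<dots> \<le> 1 / real n ^ 3" using A(2) unfolding B_def .
    finally show "let m = nat \<lceil>real (length y) / log 2 (real b) + (\<bar>c\<bar> + 5) * log 2 (real (length y))\<rceil>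
         in \<bar>2 ^ length y * measure M (cyl 2 y) - 2 ^ length y * mu_m b d m y\<bar> \<le> 1 / real (length y) ^ 3"
      unfolding Let_def m_def[symmetric] n_def[symmetric] J_def[symmetric] by simp
  qed
qed

end
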